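(* Let $G_1$ and $G_2$ be vertex-disjoint graphs. Then $$\frac{\sigma_1(G_1\cup G_2)}{\sigma_0(G_1\cup G_2)}=\frac{\sigma_1(G_1)}{\sigma_0(G_1)}+\frac{\sigma_1(G_2)}{\sigma_0(G_2)}.$$ Moreover, for every graph $G$ with at least one vertex, no isolated vertex, and maximum degree at most $2$, $$\frac{\sigma_1(G)}{\sigma_0(G)}\ge\frac13,$$ with equality for $G=P_2$.
   Context: All graphs are finite and simple. $\sigma_0(G)$ is the number of independent vertex sets of $G$ (including the empty set) and $\sigma_1(G)$ is the number of vertex sets $S\subseteq V(G)$ whose induced subgraph has exactly one edge. $G_1\cup G_2$ is the disjoint union (vertex set $V(G_1)\cup V(G_2)$, edge set $E(G_1)\cup E(G_2)$). $P_2$ is the path on two vertices (a single edge). *)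

theory Defs
  imports Complex_Main
begin

definition simple_graph :: "'a set \<Rightarrow> 'a set set \<Rightarrow> bool" where
  "simple_graph V E \<longleftrightarrow> finite V \<and> (\<forall>e\<in>E. e \<subseteq> V \<and> card e = 2)"

definition induced_edges :: "'a set set \<Rightarrow> 'a set \<Rightarrow> 'a set set" where
  "induced_edges E S = {e \<in> E. e \<subseteq> S}"

definition sigma0 :: "'a set \<Rightarrow> 'a set set \<Rightarrow> nat" where
  "sigma0 V E = card {S. S \<subseteq> V \<and> induced_edges E S = {}}"

definition sigma1 :: "'a set \<Rightarrow> 'a set set \<Rightarrow> nat" where
  "sigma1 V E = card {S. S \<subseteq> V \<and> card (induced_edges E S) = 1}"

definition degree :: "'a set set \<Rightarrow> 'a \<Rightarrow> nat" where
  "degree E v = card {e \<in> E. v \<in> e}"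

end

theory Submission
  imports Defs
begin

lemma sub2: "S \<subseteq> {a,b} \<longleftrightarrow> S = {} \<or> S = {a} \<or> S = {b} \<or> S = {a,b}"
proof
  assume h: "S \<subseteq> {a,b}"
  show "S = {} \<or> S = {a} \<or> S = {b} \<or> S = {a,b}"
  proof (cases "a \<in> S"; cases "b \<in> S")
  qed (use h in blast)+
qed auto

lemma card2_sub: assumes "card e = 2" "e \<subseteq> {a,b}" shows "e = {a,b}"
proof -
  have "card e \<le> card {a,b}" using card_mono[OF _ assms(2)] by simp
  moreover have "card {a,b} \<le> 2" by (simp add: card_insert_le_m1)
  ultimately have "card e = card {a,b}" using assms(1) by linarith
  show ?thesis by (rule card_subset_eq[OF _ assms(2)]) (simp_all add: \<open>card e = card {a,b}\<close>)
qed

lemma card2_single: assumes "card e = 2" shows "\<not> e \<subseteq> {x}"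
proof
  assume "e \<subseteq> {x}"
  then have "card e \<le> card {x}" by (rule card_mono[rotated]) simp
  then show False using assms by simp
qed

lemma P2:
  assumes ab: "a \<noteq> b" and e: "{a,b} \<in> E" and c2: "\<forall>e\<in>E. card e = 2"
  shows "sigma0 {a,b} E = 3" "sigma1 {a,b} E = 1"
proof -
  have ie0: "induced_edges E {} = {}" using c2 by (auto simp: induced_edges_def)
  have iea: "induced_edges E {x} = {}" for x proof -
    have "\<not> e \<subseteq> {x}" if "e \<in> E" for e using c2 that card2_single[of e x] by simp
    then show ?thesis unfolding induced_edges_def by blast
  qed
  have eq: "x = {a,b}" if "x \<in> E" "x \<subseteq> {a,b}" for x using card2_sub[of x a b] c2 that by simp
  have ieab: "induced_edges E {a,b} = {{a,b}}" using e eq by (auto simp: induced_edges_def)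
  have "{S. S \<subseteq> {a,b} \<and> induced_edges E S = {}} = {{},{a},{b}}"
  proof (intro equalityI subsetI)
    fix S assume "S \<in> {S. S \<subseteq> {a,b} \<and> induced_edges E S = {}}"
    then have "S \<subseteq> {a,b}" and i: "induced_edges E S = {}" by simp_all
    then have "S = {} \<or> S = {a} \<or> S = {b} \<or> S = {a,b}" "induced_edges E S = {}" using sub2[of S a b] by simp_all
    then show "S \<in> {{},{a},{b}}" using ieab by auto
  next
    fix S assume "S \<in> {{},{a},{b}}"
    then show "S \<in> {S. S \<subseteq> {a,b} \<and> induced_edges E S = {}}" using ie0 iea by auto
  qed
  then show "sigma0 {a,b} E = 3" unfolding sigma0_def using ab by simp
  have "{S. S \<subseteq> {a,b} \<and> card (induced_edges E S) = 1} = {{a,b}}"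
  proof (intro equalityI subsetI)
    fix S assume "S \<in> {S. S \<subseteq> {a,b} \<and> card (induced_edges E S) = 1}"
    then have "S \<subseteq> {a,b}" and i: "card (induced_edges E S) = 1" by simp_all
    then have "S = {} \<or> S = {a} \<or> S = {b} \<or> S = {a,b}" "card (induced_edges E S) = 1" using sub2[of S a b] by simp_all
    then show "S \<in> {{a,b}}" using ie0 iea by auto
  next
    fix S assume "S \<in> {{a,b}}"
    then show "S \<in> {S. S \<subseteq> {a,b} \<and> card (induced_edges E S) = 1}" using ieab by auto
  qed
  then show "sigma1 {a,b} E = 1" unfolding sigma1_def by simp
qed


lemma split_card:
  assumes d: "V1 \<inter> V2 = {}"
  shows "card {S. S \<subseteq> V1 \<union> V2 \<and> P (S \<inter> V1) \<and> Q (S \<inter> V2)}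
       = card {A. A \<subseteq> V1 \<and> P A} * card {B. B \<subseteq> V2 \<and> Q B}"
proof -
  let ?A = "{A. A \<subseteq> V1 \<and> P A}" and ?B = "{B. B \<subseteq> V2 \<and> Q B}"
  have eqs: "{S. S \<subseteq> V1 \<union> V2 \<and> P (S \<inter> V1) \<and> Q (S \<inter> V2)} = (\<lambda>(A,B). A \<union> B) ` (?A \<times> ?B)"
  proof (intro equalityI subsetI)
    fix S assume "S \<in> {S. S \<subseteq> V1 \<union> V2 \<and> P (S \<inter> V1) \<and> Q (S \<inter> V2)}"
    then have h: "S \<subseteq> V1 \<union> V2" "P (S \<inter> V1)" "Q (S \<inter> V2)" by auto
    have "S = (\<lambda>(A,B). A \<union> B) (S \<inter> V1, S \<inter> V2)" using h(1) by auto
    moreover have "(S \<inter> V1, S \<inter> V2) \<in> ?A \<times> ?B" using h by auto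
    ultimately show "S \<in> (\<lambda>(A,B). A \<union> B) ` (?A \<times> ?B)" by (rule image_eqI)
  next
    fix S assume "S \<in> (\<lambda>(A,B). A \<union> B) ` (?A \<times> ?B)"
    then obtain A B where AB: "A \<in> ?A" "B \<in> ?B" "S = A \<union> B" by auto
    have "S \<inter> V1 = A" "S \<inter> V2 = B" using AB d by auto
    then show "S \<in> {S. S \<subseteq> V1 \<union> V2 \<and> P (S \<inter> V1) \<and> Q (S \<inter> V2)}" using AB by auto
  qed
  have inj: "inj_on (\<lambda>(A,B). A \<union> B) (?A \<times> ?B)"
  proof (rule inj_onI)
    fix x y assume "x \<in> ?A \<times> ?B" "y \<in> ?A \<times> ?B" "(\<lambda>(A,B). A \<union> B) x = (\<lambda>(A,B). A \<union> B) y"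
    moreover obtain A B A' B' where "x = (A,B)" "y = (A',B')" by fastforce
    ultimately have "A \<subseteq> V1" "B \<subseteq> V2" "A' \<subseteq> V1" "B' \<subseteq> V2" "A \<union> B = A' \<union> B'" "x = (A,B)" "y = (A',B')" by auto
    moreover have "A = (A \<union> B) \<inter> V1" "A' = (A' \<union> B') \<inter> V1" "B = (A \<union> B) \<inter> V2" "B' = (A' \<union> B') \<inter> V2"
      using calculation d by auto
    ultimately show "x = y" by simp
  qed
  show ?thesis unfolding eqs card_image[OF inj] card_cartesian_product ..
qed

lemma ie_split:
  assumes g1: "simple_graph V1 E1" and g2: "simple_graph V2 E2" and d: "V1 \<inter> V2 = {}"
  shows "induced_edges (E1 \<union> E2) S = induced_edges E1 (S \<inter> V1) \<union> induced_edges E2 (S \<inter> V2)"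
    and "induced_edges E1 (S \<inter> V1) \<inter> induced_edges E2 (S \<inter> V2) = {}"
    and "finite (induced_edges E1 (S \<inter> V1))" "finite (induced_edges E2 (S \<inter> V2))"
proof -
  have s1: "\<forall>e\<in>E1. e \<subseteq> V1 \<and> card e = 2" and s2: "\<forall>e\<in>E2. e \<subseteq> V2 \<and> card e = 2"
    and f1: "finite V1" and f2: "finite V2" using g1 g2 by (auto simp: simple_graph_def)
  show "induced_edges (E1 \<union> E2) S = induced_edges E1 (S \<inter> V1) \<union> induced_edges E2 (S \<inter> V2)"
    using s1 s2 by (auto simp: induced_edges_def)
  show "induced_edges E1 (S \<inter> V1) \<inter> induced_edges E2 (S \<inter> V2) = {}"
  proof (rule ccontr)
    assume "induced_edges E1 (S \<inter> V1) \<inter> induced_edges E2 (S \<inter> V2) \<noteq> {}"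
    then obtain e where "e \<in> E1" "e \<in> E2" by (auto simp: induced_edges_def)
    then have "e \<subseteq> V1 \<inter> V2" "card e = 2" using s1 s2 by auto
    then show False using d by simp
  qed
  have "E1 \<subseteq> Pow V1" "E2 \<subseteq> Pow V2" using s1 s2 by auto
  then have "finite E1" "finite E2" using f1 f2 finite_subset by blast+
  then show "finite (induced_edges E1 (S \<inter> V1))" "finite (induced_edges E2 (S \<inter> V2))"
    by (auto simp: induced_edges_def)
qed

lemma union_counts:
  assumes g1: "simple_graph V1 E1" and g2: "simple_graph V2 E2" and d: "V1 \<inter> V2 = {}"
  shows "sigma0 (V1 \<union> V2) (E1 \<union> E2) = sigma0 V1 E1 * sigma0 V2 E2"
    and "sigma1 (V1 \<union> V2) (E1 \<union> E2) = sigma1 V1 E1 * sigma0 V2 E2 + sigma0 V1 E1 * sigma1 V2 E2"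
proof -
  note ie = ie_split[OF g1 g2 d]
  have f1: "finite V1" and f2: "finite V2" using g1 g2 by (auto simp: simple_graph_def)
  have "{S. S \<subseteq> V1 \<union> V2 \<and> induced_edges (E1 \<union> E2) S = {}}
     = {S. S \<subseteq> V1 \<union> V2 \<and> induced_edges E1 (S \<inter> V1) = {} \<and> induced_edges E2 (S \<inter> V2) = {}}"
    using ie(1) by auto
  then show "sigma0 (V1 \<union> V2) (E1 \<union> E2) = sigma0 V1 E1 * sigma0 V2 E2"
    unfolding sigma0_def using split_card[OF d] by simp
  let ?X = "{S. S \<subseteq> V1 \<union> V2 \<and> card (induced_edges E1 (S \<inter> V1)) = 1 \<and> induced_edges E2 (S \<inter> V2) = {}}"
  let ?Y = "{S. S \<subseteq> V1 \<union> V2 \<and> induced_edges E1 (S \<inter> V1) = {} \<and> card (induced_edges E2 (S \<inter> V2)) = 1}"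
  have cu: "card (induced_edges (E1 \<union> E2) S) = card (induced_edges E1 (S \<inter> V1)) + card (induced_edges E2 (S \<inter> V2))" for S
    using ie(1)[of S] ie(2)[of S] ie(3)[of S] ie(4)[of S] by (simp add: card_Un_disjoint)
  have eqs: "{S. S \<subseteq> V1 \<union> V2 \<and> card (induced_edges (E1 \<union> E2) S) = 1} = ?X \<union> ?Y"
  proof (intro equalityI subsetI)
    fix S assume "S \<in> {S. S \<subseteq> V1 \<union> V2 \<and> card (induced_edges (E1 \<union> E2) S) = 1}"
    then have "S \<subseteq> V1 \<union> V2" "card (induced_edges E1 (S \<inter> V1)) + card (induced_edges E2 (S \<inter> V2)) = 1"
      using cu by auto
    moreover have "card (induced_edges E1 (S \<inter> V1)) = 1 \<and> card (induced_edges E2 (S \<inter> V2)) = 0 \<or>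
      card (induced_edges E1 (S \<inter> V1)) = 0 \<and> card (induced_edges E2 (S \<inter> V2)) = 1"
      using calculation(2) by linarith
    ultimately show "S \<in> ?X \<union> ?Y" using ie(3)[of S] ie(4)[of S] by auto
  next
    fix S assume "S \<in> ?X \<union> ?Y"
    then show "S \<in> {S. S \<subseteq> V1 \<union> V2 \<and> card (induced_edges (E1 \<union> E2) S) = 1}" using cu[of S] by auto
  qed
  have fX: "finite ?X" "finite ?Y" using f1 f2 by (auto intro: finite_subset[of _ "Pow (V1 \<union> V2)"])
  have dXY: "?X \<inter> ?Y = {}" by auto
  have "sigma1 (V1 \<union> V2) (E1 \<union> E2) = card ?X + card ?Y"
    unfolding sigma1_def eqs using card_Un_disjoint[OF fX dXY] by simp
  also have "card ?X = sigma1 V1 E1 * sigma0 V2 E2"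
    unfolding sigma1_def sigma0_def by (rule split_card[OF d])
  also have "card ?Y = sigma0 V1 E1 * sigma1 V2 E2"
    unfolding sigma1_def sigma0_def by (rule split_card[OF d])
  finally show "sigma1 (V1 \<union> V2) (E1 \<union> E2) = sigma1 V1 E1 * sigma0 V2 E2 + sigma0 V1 E1 * sigma1 V2 E2" .
qed

lemma sigma0_pos: assumes "finite V" "\<forall>e\<in>E. card e = 2" shows "sigma0 V E > 0"
proof -
  have "{} \<in> {S. S \<subseteq> V \<and> induced_edges E S = {}}" using assms(2) by (auto simp: induced_edges_def)
  moreover have "finite {S. S \<subseteq> V \<and> induced_edges E S = {}}" using assms by simp
  ultimately show ?thesis unfolding sigma0_def by (metis card_gt_0_iff empty_iff)
qed


lemma nbr_card:
  assumes c2: "\<forall>e\<in>E. card e = 2" and fE: "finite E" and dg: "degree E w \<le> 2"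
  shows "card {x. {w,x} \<in> E} \<le> 2" "finite {x. {w,x} \<in> E}"
proof -
  let ?N = "{x. {w,x} \<in> E}"
  have nw: "x \<noteq> w" if "x \<in> ?N" for x
  proof
    assume "x = w" then have "{w} \<in> E" using that by simp
    then show False using c2 by fastforce
  qed
  have "?N \<subseteq> \<Union>E" by auto
  moreover have "finite (\<Union>E)" using fE c2 by (metis card.infinite finite_Union zero_neq_numeral)
  ultimately show fN: "finite ?N" by (rule finite_subset)
  have inj: "inj_on (\<lambda>x. {w,x}) ?N"
  proof (rule inj_onI)
    fix x y assume "x \<in> ?N" "y \<in> ?N" "{w,x} = {w,y}"
    then show "x = y" using nw by (metis doubleton_eq_iff)
  qed
  have sub: "(\<lambda>x. {w,x}) ` ?N \<subseteq> {e\<in>E. w \<in> e}" by auto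
  have "card ?N = card ((\<lambda>x. {w,x}) ` ?N)" using card_image[OF inj] by simp
  also have "\<dots> \<le> card {e\<in>E. w \<in> e}" by (rule card_mono) (use fE sub in auto)
  also have "\<dots> \<le> 2" using dg by (simp add: degree_def)
  finally show "card ?N \<le> 2" .
qed

lemma fin_sets: "finite W \<Longrightarrow> finite {S. S \<subseteq> W \<and> P S}"
  by simp

lemma key:
  assumes "finite W" "\<forall>e\<in>E. card e = 2" "finite E" "\<forall>x\<in>W. degree E x \<le> 2" "\<exists>e\<in>E. e \<subseteq> W"
  shows "sigma0 W E \<le> 3 * sigma1 W E"
  using assms
proof (induction "card W" arbitrary: W rule: less_induct)
  case less
  note W = less.prems
  have c2: "\<forall>e\<in>E. card e = 2" and fE: "finite E" using W by auto
  show ?case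
  proof (cases "\<exists>v\<in>W. \<forall>e\<in>E. e \<subseteq> W \<longrightarrow> v \<notin> e")
    case True
    then obtain v where v: "v \<in> W" "\<forall>e\<in>E. e \<subseteq> W \<longrightarrow> v \<notin> e" by blast
    let ?W' = "W - {v}"
    have ex': "\<exists>e\<in>E. e \<subseteq> ?W'" using W(5) v by blast
    have lt: "card ?W' < card W" using W(1) v(1) by (rule card_Diff1_less)
    have IH: "sigma0 ?W' E \<le> 3 * sigma1 ?W' E"
      using less.hyps[OF lt] W ex' by auto
    define I' where "I' = {S. S \<subseteq> ?W' \<and> induced_edges E S = {}}"
    define O' where "O' = {S. S \<subseteq> ?W' \<and> card (induced_edges E S) = 1}"
    have fI': "finite I'" "finite O'" using W(1) by (simp_all add: I'_def O'_def)
    have s0: "{S. S \<subseteq> W \<and> induced_edges E S = {}} \<subseteq> I' \<union> insert v ` I'"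
    proof
      fix S assume "S \<in> {S. S \<subseteq> W \<and> induced_edges E S = {}}"
      then have S: "S \<subseteq> W" "\<forall>e\<in>E. \<not> e \<subseteq> S" by (auto simp: induced_edges_def)
      show "S \<in> I' \<union> insert v ` I'"
      proof (cases "v \<in> S")
        case True
        then have "S - {v} \<in> I'" using S by (auto simp: I'_def induced_edges_def)
        moreover have "S = insert v (S - {v})" using True by auto
        ultimately show ?thesis by blast
      next
        case False then show ?thesis using S by (auto simp: I'_def induced_edges_def)
      qed
    qed
    have "sigma0 W E \<le> card (I' \<union> insert v ` I')" unfolding sigma0_def
      by (rule card_mono) (use fI' s0 in auto)
    also have "\<dots> \<le> card I' + card (insert v ` I')" by (rule card_Un_le)
    also have "\<dots> \<le> 2 * card I'" using card_image_le[OF fI'(1), of "insert v"] by simp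
    finally have A: "sigma0 W E \<le> 2 * sigma0 ?W' E" by (simp add: sigma0_def I'_def)
    have ieq: "induced_edges E (insert v T) = induced_edges E T" if "T \<subseteq> ?W'" for T
    proof -
      have "e \<subseteq> T" if "e \<in> E" "e \<subseteq> insert v T" for e
      proof -
        have "e \<subseteq> W" using that \<open>T \<subseteq> ?W'\<close> v(1) by auto
        then have "v \<notin> e" using v(2) that(1) by blast
        then show ?thesis using that(2) by auto
      qed
      then show ?thesis by (auto simp: induced_edges_def)
    qed
    have s1: "O' \<union> insert v ` O' \<subseteq> {S. S \<subseteq> W \<and> card (induced_edges E S) = 1}"
    proof
      fix S assume "S \<in> O' \<union> insert v ` O'"
      then show "S \<in> {S. S \<subseteq> W \<and> card (induced_edges E S) = 1}"
      proof
        assume "S \<in> O'" then show ?thesis by (auto simp: O'_def)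
      next
        assume "S \<in> insert v ` O'"
        then obtain T where T: "T \<in> O'" "S = insert v T" by blast
        then show ?thesis using ieq[of T] v(1) by (auto simp: O'_def)
      qed
    qed
    have disj: "O' \<inter> insert v ` O' = {}" by (auto simp: O'_def)
    have inj: "inj_on (insert v) O'"
    proof (rule inj_onI)
      fix x y assume "x \<in> O'" "y \<in> O'" "insert v x = insert v y"
      then have "v \<notin> x" "v \<notin> y" by (auto simp: O'_def)
      then show "x = y" using \<open>insert v x = insert v y\<close> by (metis Diff_insert_absorb)
    qed
    have "2 * sigma1 ?W' E = card (O' \<union> insert v ` O')"
      using card_Un_disjoint[OF fI'(2) _ disj] card_image[OF inj] fI'(2)
      by (simp add: O'_def sigma1_def)
    also have "\<dots> \<le> sigma1 W E" unfolding sigma1_def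
      by (rule card_mono) (use W(1) s1 in simp_all)
    finally show ?thesis using A IH by linarith
  next
    case False
    hence noiso: "\<forall>v\<in>W. \<exists>e\<in>E. e \<subseteq> W \<and> v \<in> e" by blast
    show ?thesis
    proof (cases "\<exists>e1\<in>E. \<exists>e2\<in>E. e1 \<subseteq> W \<and> e2 \<subseteq> W \<and> e1 \<noteq> e2")
      case True
      then obtain e1 e2 where e12: "e1 \<in> E" "e2 \<in> E" "e1 \<subseteq> W" "e2 \<subseteq> W" "e1 \<noteq> e2" by blast
      have "\<not> e1 \<subseteq> e2"
      proof
        assume "e1 \<subseteq> e2"
        moreover have "finite e2" "card e1 = card e2" using c2 e12 by (auto intro: card_ge_0_finite)
        ultimately show False using card_subset_eq e12(5) by blast
      qed
      then obtain v where "v \<in> e1" "v \<notin> e2" by blast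
      moreover obtain x y where "e1 = {x,y}" "x \<noteq> y" using c2 e12(1) by (metis card_2_iff)
      ultimately obtain w where vw: "e1 = {v,w}" "v \<noteq> w" by blast
      have vwE: "{v,w} \<in> E" and vW: "v \<in> W" "w \<in> W" using e12 vw by auto
      let ?W' = "W - {v}"
      have lt: "card ?W' < card W" using W(1) vW(1) by (rule card_Diff1_less)
      have ex': "\<exists>e\<in>E. e \<subseteq> ?W'" using e12 \<open>v \<notin> e2\<close> by blast
      have IH: "sigma0 ?W' E \<le> 3 * sigma1 ?W' E"
        using less.hyps[OF lt] W ex' by auto
      define Nv where "Nv = {x. {v,x} \<in> E}"
      define Nw where "Nw = {x. {w,x} \<in> E}"
      define Y where "Y = Nw - {v}"
      define X where "X = {v,w} \<union> Nv \<union> Nw"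
      define B where "B = {S. S \<subseteq> W - X \<and> induced_edges E S = {}}"
      define Av where "Av = {S. S \<subseteq> W \<and> induced_edges E S = {} \<and> v \<in> S}"
      have indep_iff: "induced_edges E S = {} \<longleftrightarrow> (\<forall>e\<in>E. \<not> e \<subseteq> S)" for S
        by (auto simp: induced_edges_def)
      have fB: "finite B" "finite Av" using W(1) by (simp_all add: B_def Av_def)
      have nc: "card Nw \<le> 2" "finite Nw" using nbr_card[OF c2 fE] W(4) vW(2) by (auto simp: Nw_def)
      have vNw: "v \<in> Nw" using vwE by (simp add: Nw_def insert_commute)
      have wNv: "w \<in> Nv" using vwE by (simp add: Nv_def)
      have cY: "card Y \<le> 1" "finite Y" using nc vNw by (auto simp: Y_def)
      have Ysub: "Y \<subseteq> X" by (auto simp: Y_def X_def)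
      have Yopt: "Z = {} \<or> Z = Y" if "Z \<subseteq> Y" for Z
      proof (cases "Z = {}")
        case True then show ?thesis by simp
      next
        case False
        then have "Z \<noteq> {}" .
        then obtain z where z: "z \<in> Z" by blast
        have "\<forall>a\<in>Y. \<forall>b\<in>Y. a = b" using cY card_le_Suc0_iff_eq[OF cY(2)] by simp
        moreover have "z \<in> Y" using z \<open>Z \<subseteq> Y\<close> by blast
        ultimately have "Y \<subseteq> Z" using z by auto
        then show ?thesis using \<open>Z \<subseteq> Y\<close> by blast
      qed
      have AvSub: "Av \<subseteq> insert v ` B \<union> (\<lambda>S'. insert v (S' \<union> Y)) ` B"
      proof
        fix S assume "S \<in> Av"
        then have S: "S \<subseteq> W" "\<forall>e\<in>E. \<not> e \<subseteq> S" "v \<in> S" by (auto simp: Av_def indep_iff)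
        let ?S' = "S - X"
        have S'B: "?S' \<in> B" using S by (auto simp: B_def indep_iff)
        have notNv: "x \<notin> S" if "x \<in> Nv" for x
        proof
          assume "x \<in> S"
          then have "{v,x} \<subseteq> S" using S(3) by simp
          moreover have "{v,x} \<in> E" using that by (simp add: Nv_def)
          ultimately show False using S(2) by blast
        qed
        have SX: "S \<inter> X \<subseteq> insert v Y"
        proof
          fix x assume x: "x \<in> S \<inter> X"
          then have "x \<notin> Nv" using notNv by blast
          moreover have "x \<noteq> w" using notNv wNv x by blast
          ultimately show "x \<in> insert v Y" using x by (auto simp: X_def Y_def)
        qed
        have "S \<inter> Y = {} \<or> S \<inter> Y = Y" using Yopt by blast
        then show "S \<in> insert v ` B \<union> (\<lambda>S'. insert v (S' \<union> Y)) ` B"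
        proof
          assume "S \<inter> Y = {}"
          then have "S = insert v ?S'" using SX S(3) by blast
          then show ?thesis using S'B by blast
        next
          assume "S \<inter> Y = Y"
          then have "S = insert v (?S' \<union> Y)" using SX S(3) Ysub by blast
          then show ?thesis using S'B by blast
        qed
      qed
      have "card Av \<le> card (insert v ` B \<union> (\<lambda>S'. insert v (S' \<union> Y)) ` B)"
        by (rule card_mono) (use fB AvSub in auto)
      also have "\<dots> \<le> card (insert v ` B) + card ((\<lambda>S'. insert v (S' \<union> Y)) ` B)" by (rule card_Un_le)
      also have "\<dots> \<le> 2 * card B" using card_image_le[OF fB(1), of "insert v"]
          card_image_le[OF fB(1), of "\<lambda>S'. insert v (S' \<union> Y)"] by simp
      finally have cAv: "card Av \<le> 2 * card B" .
      define I' where "I' = {S. S \<subseteq> ?W' \<and> induced_edges E S = {}}"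
      define O' where "O' = {S. S \<subseteq> ?W' \<and> card (induced_edges E S) = 1}"
      have fI': "finite I'" "finite O'" using W(1) by (simp_all add: I'_def O'_def)
      have s0: "{S. S \<subseteq> W \<and> induced_edges E S = {}} \<subseteq> I' \<union> Av"
        by (auto simp: I'_def Av_def)
      have "sigma0 W E \<le> card (I' \<union> Av)" unfolding sigma0_def
        by (rule card_mono) (use fI' fB s0 in auto)
      also have "\<dots> \<le> card I' + card Av" by (rule card_Un_le)
      finally have A: "sigma0 W E \<le> sigma0 ?W' E + 2 * card B" using cAv by (simp add: sigma0_def I'_def)
      have one: "induced_edges E (S' \<union> {v,w}) = {{v,w}}" if "S' \<in> B" for S'
      proof -
        from that have S': "S' \<subseteq> W - X" "\<forall>e\<in>E. \<not> e \<subseteq> S'" by (auto simp: B_def indep_iff)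
        have hv: "y \<notin> S'" if "{v,y} \<in> E" for y using that S'(1) by (auto simp: X_def Nv_def)
        have hw: "y \<notin> S'" if "{w,y} \<in> E" for y using that S'(1) by (auto simp: X_def Nw_def)
        have "e = {v,w}" if ee: "e \<in> E" "e \<subseteq> S' \<union> {v,w}" for e
        proof -
          obtain x y where xy: "e = {x,y}" "x \<noteq> y" using c2 ee(1) by (metis card_2_iff)
          have xin: "x \<in> S' \<union> {v,w}" and yin: "y \<in> S' \<union> {v,w}" using ee(2) xy by auto
          show ?thesis
          proof (cases "x \<in> S' \<and> y \<in> S'")
            case True then have "e \<subseteq> S'" using xy by simp
            then show ?thesis using S'(2) ee(1) by blast
          next
            case False
            then consider "x = v" | "x = w" | "y = v" | "y = w" using xin yin by blast
            then show ?thesis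
            proof cases
              case 1 then have "y \<notin> S'" using hv ee(1) xy by simp
              then have "y = w \<or> y = v" using yin by blast
              then have "y = w" using xy 1 by blast
              then show ?thesis using xy 1 by simp
            next
              case 2 then have "y \<notin> S'" using hw ee(1) xy by simp
              then have "y = w \<or> y = v" using yin by blast
              then have "y = v" using xy 2 by blast
              then show ?thesis using xy 2 by (metis insert_commute)
            next
              case 3
              have "{v,x} \<in> E" using ee(1) xy 3 by (metis insert_commute)
              then have "x \<notin> S'" using hv by blast
              then have "x = w \<or> x = v" using xin by blast
              then have "x = w" using xy 3 by blast
              then show ?thesis using xy 3 by (metis insert_commute)
            next
              case 4
              have "{w,x} \<in> E" using ee(1) xy 4 by (metis insert_commute)
              then have "x \<notin> S'" using hw by blast
              then have "x = w \<or> x = v" using xin by blast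
              then have "x = v" using xy 4 by blast
              then show ?thesis using xy 4 by simp
            qed
          qed
        qed
        then have "e \<in> induced_edges E (S' \<union> {v,w}) \<longleftrightarrow> e = {v,w}" for e
          using vwE unfolding induced_edges_def by blast
        then show ?thesis by blast
      qed
      have s1: "O' \<union> (\<lambda>S'. S' \<union> {v,w}) ` B \<subseteq> {S. S \<subseteq> W \<and> card (induced_edges E S) = 1}"
      proof
        fix S assume "S \<in> O' \<union> (\<lambda>S'. S' \<union> {v,w}) ` B"
        then show "S \<in> {S. S \<subseteq> W \<and> card (induced_edges E S) = 1}"
        proof
          assume "S \<in> O'" then show ?thesis by (auto simp: O'_def)
        next
          assume "S \<in> (\<lambda>S'. S' \<union> {v,w}) ` B"
          then obtain T where T: "T \<in> B" "S = T \<union> {v,w}" by blast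
          have "T \<subseteq> W" using T(1) by (auto simp: B_def)
          then have "S \<subseteq> W" using T(2) vW by blast
          moreover have "card (induced_edges E S) = 1" using one[OF T(1)] T(2) by simp
          ultimately show ?thesis by blast
        qed
      qed
      have disj: "O' \<inter> (\<lambda>S'. S' \<union> {v,w}) ` B = {}"
      proof -
        have "v \<notin> S" if "S \<in> O'" for S using that by (auto simp: O'_def)
        moreover have "v \<in> S" if "S \<in> (\<lambda>S'. S' \<union> {v,w}) ` B" for S using that by blast
        ultimately show ?thesis by blast
      qed
      have inj: "inj_on (\<lambda>S'. S' \<union> {v,w}) B"
      proof (rule inj_onI)
        fix x y assume xy: "x \<in> B" "y \<in> B" "x \<union> {v,w} = y \<union> {v,w}"
        then have "v \<notin> x" "w \<notin> x" "v \<notin> y" "w \<notin> y" by (auto simp: B_def X_def)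
        then have "x = (x \<union> {v,w}) - {v,w}" "y = (y \<union> {v,w}) - {v,w}" by auto
        then show "x = y" using xy(3) by metis
      qed
      have "sigma1 ?W' E + card B = card (O' \<union> (\<lambda>S'. S' \<union> {v,w}) ` B)"
        using card_Un_disjoint[OF fI'(2) _ disj] card_image[OF inj] fB(1)
        by (simp add: O'_def sigma1_def)
      also have "\<dots> \<le> sigma1 W E" unfolding sigma1_def
        by (rule card_mono) (use W(1) s1 in simp_all)
      finally show ?thesis using A IH by linarith
    next
      case False
      obtain e where e: "e \<in> E" "e \<subseteq> W" using W(5) by blast
      obtain a b where ab: "e = {a,b}" "a \<noteq> b" using c2 e(1) by (metis card_2_iff)
      have "W = {a,b}"
      proof
        show "{a,b} \<subseteq> W" using e ab by simp
        show "W \<subseteq> {a,b}"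
        proof
          fix x assume "x \<in> W"
          then obtain e' where "e' \<in> E" "e' \<subseteq> W" "x \<in> e'" using noiso by blast
          then have "e' = e" using False e by blast
          then show "x \<in> {a,b}" using ab \<open>x \<in> e'\<close> by simp
        qed
      qed
      then show ?thesis using P2[OF ab(2) _ c2] e(1) ab(1) by simp
    qed
  qed
qed


theorem mainTheorem15:
  shows "(\<forall>(V1::'a set) E1 V2 E2. simple_graph V1 E1 \<and> simple_graph V2 E2 \<and> V1 \<inter> V2 = {} \<longrightarrow>
            real (sigma1 (V1 \<union> V2) (E1 \<union> E2)) / real (sigma0 (V1 \<union> V2) (E1 \<union> E2))
          = real (sigma1 V1 E1) / real (sigma0 V1 E1) + real (sigma1 V2 E2) / real (sigma0 V2 E2))
    \<and> (\<forall>(V::'a set) E. simple_graph V E \<and> V \<noteq> {} \<and> (\<forall>v\<in>V. degree E v \<ge> 1) \<and> (\<forall>v\<in>V. degree E v \<le> 2)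
          \<longrightarrow> real (sigma1 V E) / real (sigma0 V E) \<ge> 1/3)
    \<and> (\<forall>a b::'a. a \<noteq> b \<longrightarrow> real (sigma1 {a, b} {{a, b}}) / real (sigma0 {a, b} {{a, b}}) = 1/3)"
proof (intro conjI allI impI)
  fix V1 V2 :: "'a set" and E1 E2
  assume h: "simple_graph V1 E1 \<and> simple_graph V2 E2 \<and> V1 \<inter> V2 = {}"
  then have g1: "simple_graph V1 E1" and g2: "simple_graph V2 E2" and d: "V1 \<inter> V2 = {}" by auto
  have p1: "sigma0 V1 E1 > 0" and p2: "sigma0 V2 E2 > 0"
    using g1 g2 sigma0_pos by (auto simp: simple_graph_def)
  note uc = union_counts[OF g1 g2 d]
  show "real (sigma1 (V1 \<union> V2) (E1 \<union> E2)) / real (sigma0 (V1 \<union> V2) (E1 \<union> E2))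
          = real (sigma1 V1 E1) / real (sigma0 V1 E1) + real (sigma1 V2 E2) / real (sigma0 V2 E2)"
    unfolding uc using p1 p2 by (simp add: field_simps)
next
  fix V :: "'a set" and E
  assume h: "simple_graph V E \<and> V \<noteq> {} \<and> (\<forall>v\<in>V. degree E v \<ge> 1) \<and> (\<forall>v\<in>V. degree E v \<le> 2)"
  then have fV: "finite V" and sE: "\<forall>e\<in>E. e \<subseteq> V \<and> card e = 2" by (auto simp: simple_graph_def)
  have c2: "\<forall>e\<in>E. card e = 2" using sE by auto
  have "E \<subseteq> Pow V" using sE by auto
  then have fE: "finite E" using fV finite_subset by blast
  obtain v where v: "v \<in> V" using h by blast
  then have "degree E v \<ge> 1" using h by blast
  then have "{e\<in>E. v \<in> e} \<noteq> {}" unfolding degree_def by (metis card.empty not_one_le_zero)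
  then obtain e where "e \<in> E" by blast
  then have ex: "\<exists>e\<in>E. e \<subseteq> V" using sE by blast
  have "sigma0 V E \<le> 3 * sigma1 V E" using key[OF fV c2 fE _ ex] h by blast
  moreover have "sigma0 V E > 0" using sigma0_pos[OF fV c2] .
  ultimately show "real (sigma1 V E) / real (sigma0 V E) \<ge> 1/3"
    by (simp add: divide_simps)
next
  fix a b :: 'a
  assume ab: "a \<noteq> b"
  have c2: "\<forall>e\<in>{{a,b}}. card e = 2" using ab by simp
  show "real (sigma1 {a, b} {{a, b}}) / real (sigma0 {a, b} {{a, b}}) = 1/3"
    using P2[OF ab _ c2] by simp
qed

end
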